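(* Let $T$ be any complete first-order theory. Then $\mathfrak C$ contains no infinite indiscernible set if and only if there are $n<\omega$ and a formula $\varphi(x_0,\dots,x_{n-1})$ such that for all pairwise distinct $a_0,\dots,a_{n-1}\in\mathfrak C$ there are permutations $\pi_1,\pi_2$ of $\{0,\dots,n-1\}$ with $\mathfrak C\models\varphi[a_{\pi_1(0)},\dots,a_{\pi_1(n-1)}]\wedge\neg\varphi[a_{\pi_2(0)},\dots,a_{\pi_2(n-1)}]$.
   Context: $\mathfrak C$ is the monster model of $T$. An indiscernible set is a set $\mathbf I$ of elements such that for each $n$, all $n$-tuples of pairwise distinct elements of $\mathbf I$ have the same type. *)

theory Defs
  imports Main "HOL-Combinatorics.Permutations"
begin

text \<open>Terms and formulas may contain
parameters (elements of the structure, constructor Par); an L-formula is one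
without parameters.\<close>

datatype ('f, 'a) trm = Var nat | Par 'a | App 'f "('f, 'a) trm list"

datatype ('f, 'r, 'a) fm =
    Eq "('f, 'a) trm" "('f, 'a) trm"
  | Rel 'r "('f, 'a) trm list"
  | Neg "('f, 'r, 'a) fm"
  | Conj "('f, 'r, 'a) fm" "('f, 'r, 'a) fm"
  | Ex nat "('f, 'r, 'a) fm"

text \<open>A structure with universe the whole type 'a.\<close>
datatype ('f, 'r, 'a) struc = Struc (funs: "'f \<Rightarrow> 'a list \<Rightarrow> 'a") (rels: "'r \<Rightarrow> 'a list \<Rightarrow> bool")

fun eval_trm :: "('f, 'r, 'a) struc \<Rightarrow> (nat \<Rightarrow> 'a) \<Rightarrow> ('f, 'a) trm \<Rightarrow> 'a" where
  "eval_trm S e (Var n) = e n"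
| "eval_trm S e (Par a) = a"
| "eval_trm S e (App f ts) = funs S f (map (eval_trm S e) ts)"

fun sat :: "('f, 'r, 'a) struc \<Rightarrow> (nat \<Rightarrow> 'a) \<Rightarrow> ('f, 'r, 'a) fm \<Rightarrow> bool" where
  "sat S e (Eq s t) = (eval_trm S e s = eval_trm S e t)"
| "sat S e (Rel r ts) = rels S r (map (eval_trm S e) ts)"
| "sat S e (Neg \<phi>) = (\<not> sat S e \<phi>)"
| "sat S e (Conj \<phi> \<psi>) = (sat S e \<phi> \<and> sat S e \<psi>)"
| "sat S e (Ex n \<phi>) = (\<exists>a. sat S (e(n := a)) \<phi>)"

fun fv_trm :: "('f, 'a) trm \<Rightarrow> nat set" where
  "fv_trm (Var n) = {n}"
| "fv_trm (Par a) = {}"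
| "fv_trm (App f ts) = (\<Union>t\<in>set ts. fv_trm t)"

fun params_trm :: "('f, 'a) trm \<Rightarrow> 'a set" where
  "params_trm (Var n) = {}"
| "params_trm (Par a) = {a}"
| "params_trm (App f ts) = (\<Union>t\<in>set ts. params_trm t)"

fun fv :: "('f, 'r, 'a) fm \<Rightarrow> nat set" where
  "fv (Eq s t) = fv_trm s \<union> fv_trm t"
| "fv (Rel r ts) = (\<Union>t\<in>set ts. fv_trm t)"
| "fv (Neg \<phi>) = fv \<phi>"
| "fv (Conj \<phi> \<psi>) = fv \<phi> \<union> fv \<psi>"
| "fv (Ex n \<phi>) = fv \<phi> - {n}"

fun params :: "('f, 'r, 'a) fm \<Rightarrow> 'a set" where
  "params (Eq s t) = params_trm s \<union> params_trm t"
| "params (Rel r ts) = (\<Union>t\<in>set ts. params_trm t)"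
| "params (Neg \<phi>) = params \<phi>"
| "params (Conj \<phi> \<psi>) = params \<phi> \<union> params \<psi>"
| "params (Ex n \<phi>) = params \<phi>"

definition L_formula :: "('f, 'r, 'a) fm \<Rightarrow> bool" where
  "L_formula \<phi> \<longleftrightarrow> params \<phi> = {}"

definition L_sentence :: "('f, 'r, 'a) fm \<Rightarrow> bool" where
  "L_sentence \<phi> \<longleftrightarrow> L_formula \<phi> \<and> fv \<phi> = {}"

definition is_model :: "('f, 'r, 'a) struc \<Rightarrow> ('f, 'r, 'a) fm set \<Rightarrow> bool" where
  "is_model M T \<longleftrightarrow> (\<forall>\<phi>\<in>T. \<forall>e. sat M e \<phi>)"

text \<open>A complete theory: a satisfiable set of L-sentences that, for every
L-sentence, contains it or its negation (theories taken deductively closed).\<close>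
definition complete_theory :: "('f, 'r, 'a) fm set \<Rightarrow> bool" where
  "complete_theory T \<longleftrightarrow>
     (\<forall>\<phi>\<in>T. L_sentence \<phi>) \<and> (\<exists>M. is_model M T) \<and>
     (\<forall>\<phi>. L_sentence \<phi> \<longrightarrow> \<phi> \<in> T \<or> Neg \<phi> \<in> T)"

text \<open>kappa-saturation (kappa = |K|): every finitely satisfiable set of formulas
in the free variable 0 with parameters from a set of size < kappa is realized.\<close>
definition saturated :: "'k set \<Rightarrow> ('f, 'r, 'a) struc \<Rightarrow> bool" where
  "saturated K M \<longleftrightarrow>
     (\<forall>A p. (card_of A, card_of K) \<in> ordLess \<longrightarrow> (\<forall>\<phi>\<in>p. params \<phi> \<subseteq> A \<and> fv \<phi> \<subseteq> {0}) \<longrightarrow>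
        (\<forall>q. finite q \<and> q \<subseteq> p \<longrightarrow> (\<exists>a. \<forall>\<phi>\<in>q. sat M (\<lambda>_. a) \<phi>)) \<longrightarrow>
        (\<exists>a. \<forall>\<phi>\<in>p. sat M (\<lambda>_. a) \<phi>))"

definition automorphism :: "('f, 'r, 'a) struc \<Rightarrow> ('a \<Rightarrow> 'a) \<Rightarrow> bool" where
  "automorphism M \<sigma> \<longleftrightarrow> bij \<sigma> \<and>
     (\<forall>f xs. \<sigma> (funs M f xs) = funs M f (map \<sigma> xs)) \<and>
     (\<forall>r xs. rels M r xs \<longleftrightarrow> rels M r (map \<sigma> xs))"

definition strongly_homogeneous :: "'k set \<Rightarrow> ('f, 'r, 'a) struc \<Rightarrow> bool" where
  "strongly_homogeneous K M \<longleftrightarrow>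
     (\<forall>A h. (card_of A, card_of K) \<in> ordLess \<longrightarrow>
        (\<forall>\<phi> e. L_formula \<phi> \<longrightarrow> range e \<subseteq> A \<longrightarrow> (sat M e \<phi> \<longleftrightarrow> sat M (h \<circ> e) \<phi>)) \<longrightarrow>
        (\<exists>\<sigma>. automorphism M \<sigma> \<and> (\<forall>a\<in>A. \<sigma> a = h a)))"

text \<open>Monster model of T: a kappa-saturated, strongly kappa-homogeneous model of T,
where kappa = |K| is uncountable and bigger than the size |L| of the language.\<close>
definition monster_model :: "('f, 'r, 'a) fm set \<Rightarrow> 'k set \<Rightarrow> ('f, 'r, 'a) struc \<Rightarrow> bool" where
  "monster_model T K M \<longleftrightarrow> is_model M T \<and>
     (natLeq, card_of K) \<in> ordLess \<and> (card_of (UNIV :: ('f + 'r) set), card_of K) \<in> ordLess \<and>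
     saturated K M \<and> strongly_homogeneous K M"

definition indiscernible_set :: "('f, 'r, 'a) struc \<Rightarrow> 'a set \<Rightarrow> bool" where
  "indiscernible_set M I \<longleftrightarrow>
     (\<forall>n xs ys. length xs = n \<and> length ys = n \<and> distinct xs \<and> distinct ys \<and>
        set xs \<subseteq> I \<and> set ys \<subseteq> I \<longrightarrow>
        (\<forall>\<phi>. L_formula \<phi> \<and> fv \<phi> \<subseteq> {..<n} \<longrightarrow>
           (sat M (\<lambda>i. xs ! i) \<phi> \<longleftrightarrow> sat M (\<lambda>i. ys ! i) \<phi>)))"

end

theory Submission
  imports Defs
begin

fun inst_trm :: "nat set \<Rightarrow> (nat \<Rightarrow> 'a) \<Rightarrow> ('f,'a) trm \<Rightarrow> ('f,'a) trm" where
  "inst_trm V e (Var n) = (if n \<in> V then Par (e n) else Var n)"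
| "inst_trm V e (Par a) = Par a"
| "inst_trm V e (App f ts) = App f (map (inst_trm V e) ts)"

fun inst :: "nat set \<Rightarrow> (nat \<Rightarrow> 'a) \<Rightarrow> ('f,'r,'a) fm \<Rightarrow> ('f,'r,'a) fm" where
  "inst V e (Eq s t) = Eq (inst_trm V e s) (inst_trm V e t)"
| "inst V e (Rel r ts) = Rel r (map (inst_trm V e) ts)"
| "inst V e (Neg \<phi>) = Neg (inst V e \<phi>)"
| "inst V e (Conj \<phi> \<psi>) = Conj (inst V e \<phi>) (inst V e \<psi>)"
| "inst V e (Ex n \<phi>) = Ex n (inst (V - {n}) e \<phi>)"

lemma eval_inst_trm: "eval_trm S g (inst_trm V e t) = eval_trm S (\<lambda>v. if v \<in> V then e v else g v) t"
  by (induction t) (simp_all cong: map_cong)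

lemma fv_inst_trm: "fv_trm (inst_trm V e t) = fv_trm t - V"
  by (induction t) auto

lemma params_inst_trm: "params_trm (inst_trm V e t) \<subseteq> params_trm t \<union> e ` V"
  by (induction t) auto

lemma sat_inst: "sat S g (inst V e \<phi>) = sat S (\<lambda>v. if v \<in> V then e v else g v) \<phi>"
proof (induction \<phi> arbitrary: V g)
  case (Ex n \<phi>)
  have "\<And>a. (\<lambda>v. if v \<in> V - {n} then e v else (g(n := a)) v) = (\<lambda>v. if v \<in> V then e v else g v)(n := a)"
    by auto
  then show ?case using Ex by simp
qed (auto simp: eval_inst_trm comp_def)

lemma fv_inst: "fv (inst V e \<phi>) = fv \<phi> - V"
proof (induction \<phi> arbitrary: V)
  case (Eq x1 x2)
  then show ?case by (simp add: fv_inst_trm Un_Diff)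
next
  case (Rel x1 x2)
  then show ?case by (auto simp: fv_inst_trm)
next
  case (Neg \<phi>)
  then show ?case by simp
next
  case (Conj \<phi>1 \<phi>2)
  then show ?case by (simp add: Un_Diff)
next
  case (Ex x1 \<phi>)
  then show ?case by auto
qed

lemma params_inst: "params (inst V e \<phi>) \<subseteq> params \<phi> \<union> e ` V"
proof (induction \<phi> arbitrary: V)
  case (Eq x1 x2)
  then show ?case using params_inst_trm[of V e x1] params_inst_trm[of V e x2] by auto
next
  case (Rel x1 x2)
  show ?case
  proof
    fix a assume "a \<in> params (inst V e (Rel x1 x2))"
    then obtain t where t: "t \<in> set x2" "a \<in> params_trm (inst_trm V e t)" by auto
    then have "a \<in> params_trm t \<union> e ` V" using params_inst_trm[of V e t] by blast
    then show "a \<in> params (Rel x1 x2) \<union> e ` V" using t(1) by auto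
  qed
next
  case (Neg \<phi>)
  then show ?case by simp
next
  case (Conj \<phi>1 \<phi>2)
  then show ?case using Conj.IH[of V] by auto
next
  case (Ex n \<phi>)
  then show ?case using Ex.IH[of "V - {n}"] by auto
qed

lemma eval_trm_cong: "(\<forall>v\<in>fv_trm t. g v = h v) \<Longrightarrow> eval_trm S g t = eval_trm S h t"
  by (induction t) (simp_all cong: map_cong)

lemma sat_cong: "(\<forall>v\<in>fv \<phi>. g v = h v) \<Longrightarrow> sat S g \<phi> = sat S h \<phi>"
proof (induction \<phi> arbitrary: g h)
  case (Eq x1 x2)
  then have "eval_trm S g x1 = eval_trm S h x1" "eval_trm S g x2 = eval_trm S h x2"
    by (auto intro!: eval_trm_cong)
  then show ?case by simp
next
  case (Rel x1 x2)
  have "\<forall>x\<in>set x2. eval_trm S g x = eval_trm S h x"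
    using Rel.prems by (fastforce intro!: eval_trm_cong)
  then have "map (eval_trm S g) x2 = map (eval_trm S h) x2" by simp
  then show ?case by (simp only: sat.simps)
next
  case (Neg \<phi>)
  then show ?case by simp
next
  case (Conj \<phi>1 \<phi>2)
  have "sat S g \<phi>1 = sat S h \<phi>1" using Conj.prems by (intro Conj.IH(1)) simp
  moreover have "sat S g \<phi>2 = sat S h \<phi>2" using Conj.prems by (intro Conj.IH(2)) simp
  ultimately show ?case by simp
next
  case (Ex n \<phi>)
  have "sat S (g(n:=a)) \<phi> = sat S (h(n:=a)) \<phi>" for a
  proof (rule Ex.IH)
    show "\<forall>v\<in>fv \<phi>. (g(n:=a)) v = (h(n:=a)) v" using Ex.prems by auto
  qed
  then show ?case by simp
qed

fun exs :: "nat list \<Rightarrow> ('f,'r,'a) fm \<Rightarrow> ('f,'r,'a) fm" where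
  "exs [] \<phi> = \<phi>"
| "exs (v # vs) \<phi> = Ex v (exs vs \<phi>)"

lemma sat_exs: "sat S g (exs vs \<phi>) \<longleftrightarrow> (\<exists>h. (\<forall>v. v \<notin> set vs \<longrightarrow> h v = g v) \<and> sat S h \<phi>)"
proof (induction vs arbitrary: g)
  case Nil
  then show ?case by auto
next
  case (Cons v vs)
  show ?case
  proof
    assume "sat S g (exs (v # vs) \<phi>)"
    then obtain a h where "\<forall>w. w \<notin> set vs \<longrightarrow> h w = (g(v:=a)) w" "sat S h \<phi>" using Cons by auto
    then show "\<exists>h. (\<forall>w. w \<notin> set (v # vs) \<longrightarrow> h w = g w) \<and> sat S h \<phi>" by (intro exI[of _ h]) auto
  next
    assume "\<exists>h. (\<forall>w. w \<notin> set (v # vs) \<longrightarrow> h w = g w) \<and> sat S h \<phi>"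
    then obtain h where h: "\<forall>w. w \<notin> set (v # vs) \<longrightarrow> h w = g w" "sat S h \<phi>" by blast
    then have "\<forall>w. w \<notin> set vs \<longrightarrow> h w = (g(v:=h v)) w" by auto
    then have "sat S (g(v:=h v)) (exs vs \<phi>)" using Cons.IH h(2) by blast
    then show "sat S g (exs (v # vs) \<phi>)" by auto
  qed
qed

lemma fv_exs: "fv (exs vs \<phi>) = fv \<phi> - set vs"
  by (induction vs) auto

lemma params_exs: "params (exs vs \<phi>) = params \<phi>"
  by (induction vs) auto

definition TT :: "('f,'r,'a) fm" where "TT = Ex 0 (Eq (Var 0) (Var 0))"

fun conjs :: "('f,'r,'a) fm list \<Rightarrow> ('f,'r,'a) fm" where
  "conjs [] = TT"
| "conjs (\<phi> # \<phi>s) = Conj \<phi> (conjs \<phi>s)"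

lemma sat_conjs: "sat S g (conjs l) \<longleftrightarrow> (\<forall>\<phi>\<in>set l. sat S g \<phi>)"
  by (induction l) (auto simp: TT_def)

lemma fv_conjs: "fv (conjs l) = (\<Union>\<phi>\<in>set l. fv \<phi>)"
  by (induction l) (auto simp: TT_def)

lemma params_conjs: "params (conjs l) = (\<Union>\<phi>\<in>set l. params \<phi>)"
  by (induction l) (auto simp: TT_def)

definition conjset :: "('f,'r,'a) fm set \<Rightarrow> ('f,'r,'a) fm" where
  "conjset S = conjs (SOME l. set l = S)"

lemma conjset_set: "finite S \<Longrightarrow> set (SOME l. set l = S) = S"
  by (metis (mono_tags, lifting) finite_list someI_ex)

lemma sat_conjset: "finite A \<Longrightarrow> sat S g (conjset A) \<longleftrightarrow> (\<forall>\<phi>\<in>A. sat S g \<phi>)"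
  by (simp add: conjset_def sat_conjs conjset_set)

lemma fv_conjset: "finite A \<Longrightarrow> fv (conjset A) = (\<Union>\<phi>\<in>A. fv \<phi>)"
  by (simp add: conjset_def fv_conjs conjset_set)

lemma params_conjset: "finite A \<Longrightarrow> params (conjset A) = (\<Union>\<phi>\<in>A. params \<phi>)"
  by (simp add: conjset_def params_conjs conjset_set)

definition Iff :: "('f,'r,'a) fm \<Rightarrow> ('f,'r,'a) fm \<Rightarrow> ('f,'r,'a) fm" where
  "Iff a b = Conj (Neg (Conj a (Neg b))) (Neg (Conj b (Neg a)))"

lemma sat_Iff: "sat S g (Iff a b) \<longleftrightarrow> (sat S g a \<longleftrightarrow> sat S g b)"
  by (auto simp: Iff_def)

lemma fv_Iff: "fv (Iff a b) = fv a \<union> fv b"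
  by (auto simp: Iff_def)

lemma params_Iff: "params (Iff a b) = params a \<union> params b"
  by (auto simp: Iff_def)

definition wrap :: "nat \<Rightarrow> ('f,'r,'a) fm \<Rightarrow> nat \<Rightarrow> nat list \<Rightarrow> ('f,'r,'a) fm" where
  "wrap B \<phi> n is = exs [0..<n] (Conj (conjs (map (\<lambda>i. Eq (Var i) (Var (is!i + B))) [0..<n])) \<phi>)"

lemma sat_wrap:
  assumes "n \<le> B" "fv \<phi> \<subseteq> {..<n}"
  shows "sat S g (wrap B \<phi> n is) = sat S (\<lambda>i. g (is!i + B)) \<phi>"
proof -
  have "sat S g (wrap B \<phi> n is) \<longleftrightarrow> (\<exists>h. (\<forall>v. v \<notin> {0..<n} \<longrightarrow> h v = g v) \<and> (\<forall>i<n. h i = h (is!i + B)) \<and> sat S h \<phi>)"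
    unfolding wrap_def sat_exs by (simp add: sat_conjs atLeast0LessThan lessThan_def)
  also have "\<dots> \<longleftrightarrow> sat S (\<lambda>i. g (is!i + B)) \<phi>"
  proof
    assume "\<exists>h. (\<forall>v. v \<notin> {0..<n} \<longrightarrow> h v = g v) \<and> (\<forall>i<n. h i = h (is!i + B)) \<and> sat S h \<phi>"
    then obtain h where h: "\<forall>v. v \<notin> {0..<n} \<longrightarrow> h v = g v" "\<forall>i<n. h i = h (is!i + B)" "sat S h \<phi>" by blast
    have "\<forall>v\<in>fv \<phi>. h v = g (is!v + B)"
    proof
      fix v assume "v \<in> fv \<phi>"
      then have v: "v < n" using assms by auto
      then have "h v = h (is!v + B)" using h(2) by blast
      moreover have "is!v + B \<notin> {0..<n}" using assms by auto
      ultimately show "h v = g (is!v + B)" using h(1) by metis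
    qed
    then show "sat S (\<lambda>i. g (is!i + B)) \<phi>" using h(3) sat_cong[of \<phi> h "\<lambda>i. g (is!i + B)"] by auto
  next
    assume a: "sat S (\<lambda>i. g (is!i + B)) \<phi>"
    define h where "h = (\<lambda>v. if v < n then g (is!v + B) else g v)"
    have "\<forall>v\<in>fv \<phi>. h v = g (is!v + B)" using assms by (auto simp: h_def)
    then have "sat S h \<phi>" using a sat_cong[of \<phi> h "\<lambda>i. g (is!i + B)"] by auto
    moreover have "\<forall>i<n. h i = h (is!i + B)" using assms by (auto simp: h_def)
    moreover have "\<forall>v. v \<notin> {0..<n} \<longrightarrow> h v = g v" by (auto simp: h_def)
    ultimately show "\<exists>h. (\<forall>v. v \<notin> {0..<n} \<longrightarrow> h v = g v) \<and> (\<forall>i<n. h i = h (is!i + B)) \<and> sat S h \<phi>"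
      by blast
  qed
  finally show ?thesis .
qed

lemma fv_wrap: "fv \<phi> \<subseteq> {..<n} \<Longrightarrow> n \<le> B \<Longrightarrow> fv (wrap B \<phi> n is) \<subseteq> (\<lambda>i. is!i + B) ` {..<n}"
  unfolding wrap_def fv_exs by (auto simp: fv_conjs)

lemma params_wrap: "params (wrap B \<phi> n is) = params \<phi>"
  unfolding wrap_def params_exs by (auto simp: params_conjs)

lemma extend_perm:
  fixes a M :: nat
  assumes inj: "inj_on f {..<a}" and img: "f ` {..<a} \<subseteq> {..<M}" and aM: "a \<le> M"
  shows "\<exists>\<pi>. \<pi> permutes {..<M} \<and> (\<forall>i<a. \<pi> i = f i)"
proof -
  have c1: "card (f ` {..<a}) = a" using inj by (simp add: card_image)
  have "card ({..<M} - f ` {..<a}) = M - a" using c1 img by (simp add: card_Diff_subset)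
  then have "card {a..<M} = card ({..<M} - f ` {..<a})" by simp
  then obtain g where g: "bij_betw g {a..<M} ({..<M} - f ` {..<a})"
    using finite_same_card_bij by (metis finite_Diff finite_atLeastLessThan finite_lessThan)
  define \<pi> where "\<pi> = (\<lambda>i. if i < a then f i else if i < M then g i else i)"
  have b1: "bij_betw \<pi> {..<a} (f ` {..<a})"
    using inj_on_imp_bij_betw[OF inj] by (rule bij_betw_cong[THEN iffD1, rotated]) (auto simp: \<pi>_def)
  have b2: "bij_betw \<pi> {a..<M} ({..<M} - f ` {..<a})"
    using g by (rule bij_betw_cong[THEN iffD1, rotated]) (auto simp: \<pi>_def)
  have "bij_betw \<pi> ({..<a} \<union> {a..<M}) (f ` {..<a} \<union> ({..<M} - f ` {..<a}))"
    by (rule bij_betw_combine[OF b1 b2]) auto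
  moreover have "{..<a} \<union> {a..<M} = {..<M}" using aM by auto
  moreover have "f ` {..<a} \<union> ({..<M} - f ` {..<a}) = {..<M}" using img by auto
  ultimately have "bij_betw \<pi> {..<M} {..<M}" by simp
  then have "\<pi> permutes {..<M}"
    by (rule bij_imp_permutes) (use aM in \<open>auto simp: \<pi>_def\<close>)
  then show ?thesis by (auto simp: \<pi>_def)
qed

definition Hom :: "('f,'r,'a) struc \<Rightarrow> 'a list \<Rightarrow> nat \<Rightarrow> ('f,'r,'a) fm \<Rightarrow> bool" where
  "Hom M as a \<phi> \<longleftrightarrow> (\<forall>f. inj_on f {..<a} \<and> f ` {..<a} \<subseteq> {..<length as} \<longrightarrow>
      (sat M (\<lambda>i. as ! (f i)) \<phi> \<longleftrightarrow> sat M (\<lambda>i. as ! i) \<phi>))"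

lemma Hom_down:
  assumes "fv \<phi> \<subseteq> {..<a}" "a \<le> b" "b \<le> length as" "Hom M as b \<phi>"
  shows "Hom M as a \<phi>"
  unfolding Hom_def
proof (intro allI impI)
  fix f assume f: "inj_on f {..<a} \<and> f ` {..<a} \<subseteq> {..<length as}"
  then obtain \<pi> where \<pi>: "\<pi> permutes {..<length as}" "\<forall>i<a. \<pi> i = f i"
    using extend_perm[of f a "length as"] assms by auto
  have "inj_on \<pi> {..<b}" using permutes_inj[OF \<pi>(1)] by (simp add: inj_on_def inj_def)
  moreover have "\<pi> ` {..<b} \<subseteq> {..<length as}"
    using permutes_image[OF \<pi>(1)] assms(3) by auto
  ultimately have "sat M (\<lambda>i. as ! (\<pi> i)) \<phi> \<longleftrightarrow> sat M (\<lambda>i. as ! i) \<phi>"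
    using assms(4) unfolding Hom_def by blast
  moreover have "sat M (\<lambda>i. as ! (\<pi> i)) \<phi> = sat M (\<lambda>i. as ! (f i)) \<phi>"
    using \<pi>(2) assms(1) by (intro sat_cong) auto
  ultimately show "sat M (\<lambda>i. as ! (f i)) \<phi> = sat M (\<lambda>i. as ! i) \<phi>" by simp
qed

definition Hyp :: "('f,'r,'a) struc \<Rightarrow> bool" where
  "Hyp M \<longleftrightarrow> (\<forall>n \<phi>. L_formula \<phi> \<and> fv \<phi> \<subseteq> {..<n} \<longrightarrow>
     (\<exists>as. length as = n \<and> distinct as \<and> (\<forall>\<pi>1 \<pi>2. \<pi>1 permutes {..<n} \<and> \<pi>2 permutes {..<n} \<longrightarrow>
        sat M (\<lambda>i. as ! (\<pi>1 i)) \<phi> \<longrightarrow> sat M (\<lambda>i. as ! (\<pi>2 i)) \<phi>)))"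

lemma Hyp_Hom:
  assumes "Hyp M" "L_formula \<phi>" "fv \<phi> \<subseteq> {..<n}"
  shows "\<exists>as. length as = n \<and> distinct as \<and> Hom M as n \<phi>"
proof -
  obtain as where as: "length as = n" "distinct as" "\<forall>\<pi>1 \<pi>2. \<pi>1 permutes {..<n} \<and> \<pi>2 permutes {..<n} \<longrightarrow>
        sat M (\<lambda>i. as ! (\<pi>1 i)) \<phi> \<longrightarrow> sat M (\<lambda>i. as ! (\<pi>2 i)) \<phi>"
    using assms unfolding Hyp_def by blast
  have "Hom M as n \<phi>" unfolding Hom_def
  proof (intro allI impI)
    fix f assume f: "inj_on f {..<n} \<and> f ` {..<n} \<subseteq> {..<length as}"
    then obtain \<pi> where \<pi>: "\<pi> permutes {..<n}" "\<forall>i<n. \<pi> i = f i"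
      using extend_perm[of f n n] as by auto
    have "sat M (\<lambda>i. as ! (\<pi> i)) \<phi> = sat M (\<lambda>i. as ! (f i)) \<phi>"
      using \<pi>(2) assms(3) by (intro sat_cong) auto
    moreover have "sat M (\<lambda>i. as ! (\<pi> i)) \<phi> \<longleftrightarrow> sat M (\<lambda>i. as ! (id i)) \<phi>"
      using as(3) \<pi>(1) permutes_id by blast
    ultimately show "sat M (\<lambda>i. as ! (f i)) \<phi> = sat M (\<lambda>i. as ! i) \<phi>" by simp
  qed
  then show ?thesis using as by blast
qed

lemma block_eq:
  fixes t t' i j N :: nat
  assumes "t * N + i = t' * N + j" "i < N" "j < N"
  shows "t = t' \<and> i = j"
proof -
  have N: "N \<noteq> 0" using assms by auto
  have "(i + t * N) div N = t" "(j + t' * N) div N = t'" using assms by (simp_all add: div_mult_self1[OF N])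
  then have "t = t'" using assms(1) by (simp add: add.commute)
  then show ?thesis using assms by simp
qed

lemma block_lemma:
  assumes H: "Hyp M" and fin: "finite \<Psi>" and L: "\<forall>\<phi>\<in>\<Psi>. L_formula \<phi> \<and> fv \<phi> \<subseteq> {..<N}"
  shows "\<exists>bs. length bs = N \<and> distinct bs \<and> (\<forall>\<phi>\<in>\<Psi>. Hom M bs N \<phi>)"
proof -
  have fvN: "fv \<phi> \<subseteq> {..<N}" if "\<phi> \<in> \<Psi>" for \<phi> using L that by blast
  define k where "k = card \<Psi>"
  define M0 where "M0 = (2^k + 2) * N"
  define \<psi> where "\<psi> = conjset ((\<lambda>\<phi>. Iff \<phi> (wrap N \<phi> N [0..<N])) ` \<Psi>)"
  have fin2: "finite ((\<lambda>\<phi>. Iff \<phi> (wrap N \<phi> N [0..<N])) ` \<Psi>)" using fin by simp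
  have sat\<psi>: "sat M g \<psi> \<longleftrightarrow> (\<forall>\<phi>\<in>\<Psi>. sat M g \<phi> \<longleftrightarrow> sat M (\<lambda>i. g (i + N)) \<phi>)" for g
  proof -
    have "sat M g (wrap N \<phi> N [0..<N]) = sat M (\<lambda>i. g (i + N)) \<phi>" if "\<phi> \<in> \<Psi>" for \<phi>
    proof -
      have "sat M g (wrap N \<phi> N [0..<N]) = sat M (\<lambda>i. g ([0..<N] ! i + N)) \<phi>"
        using L that by (intro sat_wrap) auto
      also have "\<dots> = sat M (\<lambda>i. g (i + N)) \<phi>" using fvN[OF that] by (intro sat_cong) auto
      finally show ?thesis .
    qed
    then show ?thesis unfolding \<psi>_def sat_conjset[OF fin2] by (auto simp: sat_Iff)
  qed
  have fv\<psi>: "fv \<psi> \<subseteq> {..<2*N}"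
  proof -
    have "fv (wrap N \<phi> N [0..<N]) \<subseteq> {..<2*N}" if "\<phi> \<in> \<Psi>" for \<phi>
    proof -
      have "fv (wrap N \<phi> N [0..<N]) \<subseteq> (\<lambda>i. [0..<N] ! i + N) ` {..<N}"
        using L that by (intro fv_wrap) auto
      also have "\<dots> \<subseteq> {..<2*N}" by auto
      finally show ?thesis .
    qed
    then show ?thesis unfolding \<psi>_def fv_conjset[OF fin2] by (fastforce simp: fv_Iff dest: fvN)
  qed
  have L\<psi>: "L_formula \<psi>" using L unfolding \<psi>_def L_formula_def params_conjset[OF fin2]
    by (auto simp: params_Iff params_wrap)
  have M0ge: "3 * N \<le> M0"
  proof -
    have "(3::nat) \<le> 2^k + 2" using one_le_power[of "2::nat" k] by simp
    then show ?thesis unfolding M0_def using mult_le_mono1 by blast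
  qed
  have "fv \<psi> \<subseteq> {..<M0}" using fv\<psi> M0ge by auto
  then obtain as where as: "length as = M0" "distinct as" "Hom M as M0 \<psi>"
    using Hyp_Hom[OF H L\<psi>, of M0] by blast
  have hom2: "Hom M as (2*N) \<psi>" using Hom_down[OF fv\<psi> _ _ as(3)] as(1) M0ge by auto
  show ?thesis
  proof (cases "sat M (\<lambda>i. as ! i) \<psi>")
    case True
    then have all: "sat M (\<lambda>i. as ! (f i)) \<psi>" if "inj_on f {..<2*N}" "f ` {..<2*N} \<subseteq> {..<M0}" for f
      using hom2 that as(1) unfolding Hom_def by blast
    have key: "sat M (\<lambda>i. as ! (f i)) \<phi> \<longleftrightarrow> sat M (\<lambda>i. as ! (i + 2*N)) \<phi>"
      if f: "inj_on f {..<N}" "f ` {..<N} \<subseteq> {..<N}" and \<phi>: "\<phi> \<in> \<Psi>" for f \<phi>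
    proof -
      define f2 where "f2 = (\<lambda>i. if i < N then f i else i + N)"
      have fl: "\<And>x. x < N \<Longrightarrow> f x < N" using f by auto
      have "inj_on f2 {..<2*N}"
      proof (rule inj_onI)
        fix x y assume xy: "x \<in> {..<2*N}" "y \<in> {..<2*N}" "f2 x = f2 y"
        show "x = y"
        proof (cases "x < N"; cases "y < N")
          assume "x < N" "y < N" then show ?thesis using xy f(1) unfolding f2_def inj_on_def by auto
        next
          assume "x < N" "\<not> y < N" then show ?thesis using xy fl[of x] unfolding f2_def by auto
        next
          assume "\<not> x < N" "y < N" then show ?thesis using xy fl[of y] unfolding f2_def by auto
        next
          assume "\<not> x < N" "\<not> y < N" then show ?thesis using xy unfolding f2_def by auto
        qed
      qed
      moreover have "f2 ` {..<2*N} \<subseteq> {..<M0}" using f M0ge by (auto simp: f2_def)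
      ultimately have "sat M (\<lambda>i. as ! (f2 i)) \<psi>" by (rule all)
      then have "sat M (\<lambda>i. as ! (f2 i)) \<phi> \<longleftrightarrow> sat M (\<lambda>i. as ! (f2 (i + N))) \<phi>"
        using \<phi> unfolding sat\<psi> by auto
      moreover have "sat M (\<lambda>i. as ! (f2 i)) \<phi> = sat M (\<lambda>i. as ! (f i)) \<phi>"
        using fvN[OF \<phi>] by (intro sat_cong) (auto simp: f2_def)
      moreover have "(\<lambda>i. as ! (f2 (i + N))) = (\<lambda>i. as ! (i + 2*N))" by (auto simp: f2_def mult_2 add.assoc)
      ultimately show ?thesis by simp
    qed
    define bs where "bs = take N as"
    have "Hom M bs N \<phi>" if "\<phi> \<in> \<Psi>" for \<phi>
      unfolding Hom_def
    proof (intro allI impI)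
      fix f assume f: "inj_on f {..<N} \<and> f ` {..<N} \<subseteq> {..<length bs}"
      have lbs: "length bs = N" using as(1) M0ge by (simp add: bs_def)
      have "sat M (\<lambda>i. bs ! (f i)) \<phi> = sat M (\<lambda>i. as ! (f i)) \<phi>"
      proof (intro sat_cong ballI)
        fix v assume "v \<in> fv \<phi>"
        then have "f v < N" using fvN[OF that] f lbs by auto
        then show "bs ! (f v) = as ! (f v)" by (simp add: bs_def)
      qed
      also have "\<dots> = sat M (\<lambda>i. as ! (i + 2*N)) \<phi>" using key[of f \<phi>] f lbs that by simp
      also have "\<dots> = sat M (\<lambda>i. as ! (id i)) \<phi>" using key[of id \<phi>] that by simp
      also have "\<dots> = sat M (\<lambda>i. bs ! i) \<phi>"
        using fvN[OF that] by (intro sat_cong) (auto simp: bs_def)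
      finally show "sat M (\<lambda>i. bs ! (f i)) \<phi> = sat M (\<lambda>i. bs ! i) \<phi>" .
    qed
    moreover have "length bs = N" "distinct bs" using as M0ge by (auto simp: bs_def)
    ultimately show ?thesis by blast
  next
    case False
    then have none: "\<not> sat M (\<lambda>i. as ! (f i)) \<psi>" if "inj_on f {..<2*N}" "f ` {..<2*N} \<subseteq> {..<M0}" for f
      using hom2 that as(1) unfolding Hom_def by blast
    define col where "col = (\<lambda>t. {\<phi>\<in>\<Psi>. sat M (\<lambda>i. as ! (t * N + i)) \<phi>})"
    have "card (col ` {..<(2::nat)^k+1}) \<le> card (Pow \<Psi>)"
      by (rule card_mono) (auto simp: fin col_def)
    also have "\<dots> = 2^k" using fin by (simp add: card_Pow k_def)
    finally have cT: "card (col ` {..<(2::nat)^k+1}) < card {..<(2::nat)^k+1}" by simp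
    have "\<not> inj_on col {..<(2::nat)^k+1}"
    proof
      assume "inj_on col {..<(2::nat)^k+1}"
      then have "card (col ` {..<(2::nat)^k+1}) = card {..<(2::nat)^k+1}" by (rule card_image)
      with cT show False by simp
    qed
    then obtain t t' where tt: "t < 2^k+1" "t' < 2^k+1" "t \<noteq> t'" "col t = col t'"
      unfolding inj_on_def by auto
    define f where "f = (\<lambda>i. if i < N then t * N + i else t' * N + (i - N))"
    have "inj_on f {..<2*N}"
    proof (rule inj_onI)
      fix x y assume xy: "x \<in> {..<2*N}" "y \<in> {..<2*N}" "f x = f y"
      show "x = y"
      proof (cases "x < N"; cases "y < N")
        assume "x < N" "y < N" then show ?thesis using xy unfolding f_def by auto
      next
        assume a: "x < N" "\<not> y < N"
        then have "t * N + x = t' * N + (y - N)" "y - N < N" using xy unfolding f_def by auto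
        then show ?thesis using block_eq[of t N x t' "y - N"] a tt(3) by auto
      next
        assume a: "\<not> x < N" "y < N"
        then have "t' * N + (x - N) = t * N + y" "x - N < N" using xy unfolding f_def by auto
        then show ?thesis using block_eq[of t' N "x - N" t y] a tt(3) by auto
      next
        assume "\<not> x < N" "\<not> y < N" then show ?thesis using xy unfolding f_def by auto
      qed
    qed
    moreover have "f ` {..<2*N} \<subseteq> {..<M0}"
    proof -
      have "t * N + i < M0" if "t < 2^k+1" "i < N" for t i
      proof -
        have "t * N + i < (t + 1) * N" using that by simp
        also have "\<dots> \<le> (2^k+2) * N" using that by (intro mult_le_mono1) simp
        finally show ?thesis by (simp add: M0_def)
      qed
      note bnd = this
      show ?thesis
      proof
        fix y assume "y \<in> f ` {..<2*N}"
        then obtain x where x: "x < 2*N" "y = f x" by auto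
        show "y \<in> {..<M0}"
        proof (cases "x < N")
          case True then show ?thesis using x bnd[OF tt(1) True] by (simp add: f_def)
        next
          case False
          then have "x - N < N" using x by simp
          then show ?thesis using x False bnd[OF tt(2), of "x - N"] by (simp add: f_def)
        qed
      qed
    qed
    ultimately have ns: "\<not> sat M (\<lambda>i. as ! (f i)) \<psi>" by (rule none)
    have "sat M (\<lambda>i. as ! (f i)) \<psi>"
      unfolding sat\<psi>
    proof
      fix \<phi> assume \<phi>: "\<phi> \<in> \<Psi>"
      have "\<forall>v\<in>fv \<phi>. as ! (f v) = as ! (t * N + v)" using fvN[OF \<phi>] unfolding f_def by auto
      then have A: "sat M (\<lambda>i. as ! (f i)) \<phi> = sat M (\<lambda>i. as ! (t * N + i)) \<phi>"
        using sat_cong[of \<phi> "\<lambda>i. as ! (f i)" "\<lambda>i. as ! (t * N + i)" M] by simp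
      have B: "(\<lambda>i. as ! (f (i + N))) = (\<lambda>i. as ! (t' * N + i))" by (simp add: f_def)
      have "(\<phi> \<in> col t) = (\<phi> \<in> col t')" using tt(4) by simp
      then have C: "sat M (\<lambda>i. as ! (t * N + i)) \<phi> = sat M (\<lambda>i. as ! (t' * N + i)) \<phi>"
        using \<phi> by (simp add: col_def)
      show "sat M (\<lambda>i. as ! (f i)) \<phi> = sat M (\<lambda>i. as ! (f (i + N))) \<phi>" unfolding A B C ..
    qed
    with ns show ?thesis by blast
  qed
qed

definition Good :: "('f,'r,'a) struc \<Rightarrow> nat \<Rightarrow> ('f,'r,'a) fm set \<Rightarrow> (nat \<Rightarrow> 'a) \<Rightarrow> bool" where
  "Good M N \<Phi> s \<longleftrightarrow> inj_on s {..<N} \<and> (\<forall>\<phi>\<in>\<Phi>. \<forall>is js. distinct is \<and> distinct js \<and> length is = length js \<and>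
      set is \<subseteq> {..<N} \<and> set js \<subseteq> {..<N} \<and> fv \<phi> \<subseteq> {..<length is} \<longrightarrow>
      (sat M (\<lambda>i. s (is!i)) \<phi> \<longleftrightarrow> sat M (\<lambda>i. s (js!i)) \<phi>))"

lemma sat_idx:
  assumes "set is \<subseteq> {..<N}" "fv \<phi> \<subseteq> {..<length is}" "\<forall>k<N. s k = s' k"
  shows "sat M (\<lambda>i. s (is!i)) \<phi> = sat M (\<lambda>i. s' (is!i)) \<phi>"
proof (rule sat_cong, rule ballI)
  fix v assume "v \<in> fv \<phi>"
  then have "v < length is" using assms(2) by blast
  then have "is ! v \<in> set is" by (rule nth_mem)
  then have "is ! v < N" using assms(1) by blast
  then show "s (is ! v) = s' (is ! v)" using assms(3) by blast
qed

lemma Good_cong: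
  assumes eq: "\<forall>k<N. s k = s' k" and G: "Good M N \<Phi> s"
  shows "Good M N \<Phi> s'"
  unfolding Good_def
proof (intro conjI ballI allI impI)
  show "inj_on s' {..<N}"
  proof (rule inj_onI)
    fix x y assume "x \<in> {..<N}" "y \<in> {..<N}" "s' x = s' y"
    then have "s x = s y" using eq by simp
    then show "x = y" using G \<open>x \<in> {..<N}\<close> \<open>y \<in> {..<N}\<close> unfolding Good_def inj_on_def by blast
  qed
next
  fix \<phi> "is" js assume \<phi>: "\<phi> \<in> \<Phi>" and c: "distinct is \<and> distinct js \<and> length is = length js \<and>
      set is \<subseteq> {..<N} \<and> set js \<subseteq> {..<N} \<and> fv \<phi> \<subseteq> {..<length is}"
  have "sat M (\<lambda>i. s (is!i)) \<phi> \<longleftrightarrow> sat M (\<lambda>i. s (js!i)) \<phi>" using G \<phi> c unfolding Good_def by blast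
  moreover have "sat M (\<lambda>i. s (is!i)) \<phi> = sat M (\<lambda>i. s' (is!i)) \<phi>" using c eq by (intro sat_idx) auto
  moreover have "sat M (\<lambda>i. s (js!i)) \<phi> = sat M (\<lambda>i. s' (js!i)) \<phi>" using c eq by (intro sat_idx) auto
  ultimately show "sat M (\<lambda>i. s' (is!i)) \<phi> \<longleftrightarrow> sat M (\<lambda>i. s' (js!i)) \<phi>" by simp
qed

lemma Good_mono:
  assumes "N \<le> N'" "\<Phi> \<subseteq> \<Phi>'" "Good M N' \<Phi>' s"
  shows "Good M N \<Phi> s"
  unfolding Good_def
proof (intro conjI ballI allI impI)
  have sub: "{..<N} \<subseteq> {..<N'}" using assms(1) by auto
  then show "inj_on s {..<N}" using assms(3) inj_on_subset unfolding Good_def by blast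
  fix \<phi> "is" js assume \<phi>: "\<phi> \<in> \<Phi>" and c: "distinct is \<and> distinct js \<and> length is = length js \<and>
      set is \<subseteq> {..<N} \<and> set js \<subseteq> {..<N} \<and> fv \<phi> \<subseteq> {..<length is}"
  have "\<phi> \<in> \<Phi>'" using \<phi> assms(2) by blast
  moreover have "set is \<subseteq> {..<N'}" using subset_trans[of "set is" "{..<N}" "{..<N'}"] c sub by simp
  moreover have "set js \<subseteq> {..<N'}" using subset_trans[of "set js" "{..<N}" "{..<N'}"] c sub by simp
  ultimately show "sat M (\<lambda>i. s (is!i)) \<phi> \<longleftrightarrow> sat M (\<lambda>i. s (js!i)) \<phi>"
    using assms(3) c unfolding Good_def by blast
qed

lemma len_le: "distinct xs \<Longrightarrow> set xs \<subseteq> {..<N} \<Longrightarrow> length xs \<le> N"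
  by (metis card_lessThan card_mono distinct_card finite_lessThan)

definition conds :: "nat \<Rightarrow> ('f,'r,'a) fm set \<Rightarrow> (('f,'r,'a) fm \<times> nat list \<times> nat list) set" where
  "conds N \<Phi> = {(\<phi>, is, js). \<phi> \<in> \<Phi> \<and> distinct is \<and> distinct js \<and> length is = length js \<and>
      set is \<subseteq> {..<N} \<and> set js \<subseteq> {..<N} \<and> fv \<phi> \<subseteq> {..<length is}}"

lemma finite_conds: "finite \<Phi> \<Longrightarrow> finite (conds N \<Phi>)"
proof -
  assume fin: "finite \<Phi>"
  let ?L = "{xs. set xs \<subseteq> {..<N} \<and> length xs \<le> N}"
  have "finite ?L" by (rule finite_lists_length_le) simp
  then have "finite (\<Phi> \<times> ?L \<times> ?L)" using fin by simp
  moreover have "conds N \<Phi> \<subseteq> \<Phi> \<times> ?L \<times> ?L" unfolding conds_def using len_le by fastforce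
  ultimately show ?thesis by (rule finite_subset[rotated])
qed

definition DF :: "nat \<Rightarrow> ('f,'r,'a) fm set" where
  "DF N = (\<lambda>p. Neg (Eq (Var (fst p + Suc N)) (Var (snd p + Suc N)))) ` {p. fst p < N \<and> snd p < N \<and> fst p \<noteq> snd p}"

lemma finite_DF: "finite (DF N)"
proof -
  have "{p. fst p < N \<and> snd p < N \<and> fst p \<noteq> snd p} \<subseteq> {..<N} \<times> {..<N}" by auto
  then have "finite {p::nat\<times>nat. fst p < N \<and> snd p < N \<and> fst p \<noteq> snd p}" by (rule finite_subset) simp
  then show ?thesis unfolding DF_def by simp
qed

definition WF :: "nat \<Rightarrow> ('f,'r,'a) fm set \<Rightarrow> ('f,'r,'a) fm set" where
  "WF N \<Phi> = (\<lambda>(\<phi>, is, js). Iff (wrap (Suc N) \<phi> (length is) is) (wrap (Suc N) \<phi> (length js) js)) ` conds N \<Phi>"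

definition GF :: "nat \<Rightarrow> ('f,'r,'a) fm set \<Rightarrow> ('f,'r,'a) fm" where
  "GF N \<Phi> = Conj (conjset (DF N)) (conjset (WF N \<Phi>))"

lemma sat_DF: "sat M g (conjset (DF N)) \<longleftrightarrow> inj_on (\<lambda>k. g (k + Suc N)) {..<N}"
proof -
  have "sat M g (conjset (DF N)) \<longleftrightarrow> (\<forall>\<phi>\<in>DF N. sat M g \<phi>)" by (rule sat_conjset[OF finite_DF])
  also have "\<dots> \<longleftrightarrow> (\<forall>p. fst p < N \<and> snd p < N \<and> fst p \<noteq> snd p \<longrightarrow> g (fst p + Suc N) \<noteq> g (snd p + Suc N))"
    unfolding DF_def by auto
  also have "\<dots> \<longleftrightarrow> inj_on (\<lambda>k. g (k + Suc N)) {..<N}"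
  proof
    assume a: "\<forall>p. fst p < N \<and> snd p < N \<and> fst p \<noteq> snd p \<longrightarrow> g (fst p + Suc N) \<noteq> g (snd p + Suc N)"
    show "inj_on (\<lambda>k. g (k + Suc N)) {..<N}"
    proof (rule inj_onI)
      fix x y assume "x \<in> {..<N}" "y \<in> {..<N}" "g (x + Suc N) = g (y + Suc N)"
      then show "x = y" using a[rule_format, of "(x, y)"] by auto
    qed
  next
    assume a: "inj_on (\<lambda>k. g (k + Suc N)) {..<N}"
    show "\<forall>p. fst p < N \<and> snd p < N \<and> fst p \<noteq> snd p \<longrightarrow> g (fst p + Suc N) \<noteq> g (snd p + Suc N)"
    proof (intro allI impI)
      fix p :: "nat \<times> nat" assume "fst p < N \<and> snd p < N \<and> fst p \<noteq> snd p"
      then show "g (fst p + Suc N) \<noteq> g (snd p + Suc N)" using a unfolding inj_on_def by auto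
    qed
  qed
  finally show ?thesis .
qed

lemma sat_WF:
  assumes "finite \<Phi>"
  shows "sat M g (conjset (WF N \<Phi>)) \<longleftrightarrow> (\<forall>c\<in>conds N \<Phi>.
     sat M (\<lambda>i. g (fst (snd c) ! i + Suc N)) (fst c) \<longleftrightarrow> sat M (\<lambda>i. g (snd (snd c) ! i + Suc N)) (fst c))"
proof -
  have fin: "finite (WF N \<Phi>)" unfolding WF_def using finite_conds[OF assms] by simp
  have "sat M g (conjset (WF N \<Phi>)) \<longleftrightarrow> (\<forall>\<phi>\<in>WF N \<Phi>. sat M g \<phi>)" by (rule sat_conjset[OF fin])
  also have "\<dots> \<longleftrightarrow> (\<forall>c\<in>conds N \<Phi>. sat M g (wrap (Suc N) (fst c) (length (fst (snd c))) (fst (snd c)))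
        \<longleftrightarrow> sat M g (wrap (Suc N) (fst c) (length (snd (snd c))) (snd (snd c))))"
    unfolding WF_def by (auto simp: sat_Iff split: prod.splits)
  also have "\<dots> \<longleftrightarrow> (\<forall>c\<in>conds N \<Phi>.
     sat M (\<lambda>i. g (fst (snd c) ! i + Suc N)) (fst c) \<longleftrightarrow> sat M (\<lambda>i. g (snd (snd c) ! i + Suc N)) (fst c))"
  proof (rule ball_cong[OF refl])
    fix c assume c: "c \<in> conds N \<Phi>"
    obtain \<phi> "is" js where cc: "c = (\<phi>, is, js)" by (cases c) auto
    have c2: "distinct is" "distinct js" "length is = length js" "set is \<subseteq> {..<N}" "set js \<subseteq> {..<N}"
      "fv \<phi> \<subseteq> {..<length is}" using c unfolding cc conds_def by auto
    have l1: "length is \<le> Suc N" using len_le[OF c2(1) c2(4)] by simp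
    have l2: "length js \<le> Suc N" using len_le[OF c2(2) c2(5)] by simp
    have "sat M g (wrap (Suc N) \<phi> (length is) is) = sat M (\<lambda>i. g (is ! i + Suc N)) \<phi>"
      using l1 c2(6) by (rule sat_wrap)
    moreover have "sat M g (wrap (Suc N) \<phi> (length js) js) = sat M (\<lambda>i. g (js ! i + Suc N)) \<phi>"
      using l2 c2(6) c2(3) by (intro sat_wrap) auto
    ultimately show "(sat M g (wrap (Suc N) (fst c) (length (fst (snd c))) (fst (snd c)))
        \<longleftrightarrow> sat M g (wrap (Suc N) (fst c) (length (snd (snd c))) (snd (snd c)))) =
     (sat M (\<lambda>i. g (fst (snd c) ! i + Suc N)) (fst c) \<longleftrightarrow> sat M (\<lambda>i. g (snd (snd c) ! i + Suc N)) (fst c))"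
      unfolding cc by simp
  qed
  finally show ?thesis .
qed

lemma sat_GF:
  assumes "finite \<Phi>"
  shows "sat M g (GF N \<Phi>) \<longleftrightarrow> Good M N \<Phi> (\<lambda>k. g (k + Suc N))"
proof -
  have "sat M g (GF N \<Phi>) \<longleftrightarrow> inj_on (\<lambda>k. g (k + Suc N)) {..<N} \<and> (\<forall>c\<in>conds N \<Phi>.
     sat M (\<lambda>i. g (fst (snd c) ! i + Suc N)) (fst c) \<longleftrightarrow> sat M (\<lambda>i. g (snd (snd c) ! i + Suc N)) (fst c))"
    unfolding GF_def sat.simps sat_DF sat_WF[OF assms] ..
  also have "\<dots> \<longleftrightarrow> Good M N \<Phi> (\<lambda>k. g (k + Suc N))"
    unfolding Good_def conds_def by auto
  finally show ?thesis .
qed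

lemma fv_GF:
  fixes \<Phi> :: "('f,'r,'a) fm set"
  assumes fin: "finite \<Phi>"
  shows "fv (GF N \<Phi>) \<subseteq> {Suc N..<Suc N + N}"
proof -
  have "fv (conjset (DF N :: ('f,'r,'a) fm set)) = (\<Union>\<phi>\<in>(DF N :: ('f,'r,'a) fm set). fv \<phi>)" by (simp add: fv_conjset finite_DF)
  also have "\<dots> \<subseteq> {Suc N..<Suc N + N}" unfolding DF_def by auto
  finally have "fv (conjset (DF N :: ('f,'r,'a) fm set)) \<subseteq> {Suc N..<Suc N + N}" .
  moreover have "fv \<psi> \<subseteq> {Suc N..<Suc N + N}" if inW: "\<psi> \<in> WF N \<Phi>" for \<psi>
  proof -
    obtain c where c0: "c \<in> conds N \<Phi>"
      and \<psi>0: "\<psi> = (\<lambda>(\<phi>, is, js). Iff (wrap (Suc N) \<phi> (length is) is) (wrap (Suc N) \<phi> (length js) js)) c"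
      using inW unfolding WF_def by blast
    obtain \<phi> "is" js where cc: "c = (\<phi>, is, js)" by (cases c) auto
    have c: "(\<phi>, is, js) \<in> conds N \<Phi>" using c0 cc by simp
    have \<psi>: "\<psi> = Iff (wrap (Suc N) \<phi> (length is) is) (wrap (Suc N) \<phi> (length js) js)"
      using \<psi>0 cc by simp
    have c2: "distinct is" "distinct js" "length is = length js" "set is \<subseteq> {..<N}" "set js \<subseteq> {..<N}"
      "fv \<phi> \<subseteq> {..<length is}" using c unfolding conds_def by auto
    have l1: "length is \<le> Suc N" using len_le[OF c2(1) c2(4)] by simp
    have l2: "length js \<le> Suc N" using len_le[OF c2(2) c2(5)] by simp
    have "fv (wrap (Suc N) \<phi> (length is) is) \<subseteq> (\<lambda>i. is!i + Suc N) ` {..<length is}"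
      using c2(6) l1 by (rule fv_wrap)
    also have "\<dots> \<subseteq> {Suc N..<Suc N + N}"
    proof
      fix x assume "x \<in> (\<lambda>i. is!i + Suc N) ` {..<length is}"
      then obtain i where i: "i < length is" "x = is!i + Suc N" by auto
      then have "is ! i < N" using c2(4) nth_mem by blast
      then show "x \<in> {Suc N..<Suc N + N}" using i by auto
    qed
    finally have 1: "fv (wrap (Suc N) \<phi> (length is) is) \<subseteq> {Suc N..<Suc N + N}" .
    have "fv (wrap (Suc N) \<phi> (length js) js) \<subseteq> (\<lambda>i. js!i + Suc N) ` {..<length js}"
      using c2(6) c2(3) l2 by (intro fv_wrap) auto
    also have "\<dots> \<subseteq> {Suc N..<Suc N + N}"
    proof
      fix x assume "x \<in> (\<lambda>i. js!i + Suc N) ` {..<length js}"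
      then obtain i where i: "i < length js" "x = js!i + Suc N" by auto
      then have "js ! i < N" using c2(5) nth_mem by blast
      then show "x \<in> {Suc N..<Suc N + N}" using i by auto
    qed
    finally have 2: "fv (wrap (Suc N) \<phi> (length js) js) \<subseteq> {Suc N..<Suc N + N}" .
    show ?thesis unfolding \<psi> fv_Iff using 1 2 by blast
  qed
  moreover have "finite (WF N \<Phi>)"
    unfolding WF_def using finite_conds[OF fin] by simp
  ultimately show ?thesis unfolding GF_def fv.simps by (simp add: fv_conjset) blast
qed

lemma params_GF:
  fixes \<Phi> :: "('f,'r,'a) fm set"
  assumes fin: "finite \<Phi>" and L: "\<forall>\<phi>\<in>\<Phi>. L_formula \<phi>"
  shows "params (GF N \<Phi>) = {}"
proof -
  have "params (conjset (DF N :: ('f,'r,'a) fm set)) = (\<Union>\<phi>\<in>(DF N :: ('f,'r,'a) fm set). params \<phi>)" by (simp add: params_conjset finite_DF)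
  also have "\<dots> = {}" unfolding DF_def by auto
  finally have "params (conjset (DF N :: ('f,'r,'a) fm set)) = {}" .
  moreover have "params \<psi> = {}" if inW: "\<psi> \<in> WF N \<Phi>" for \<psi>
  proof -
    obtain c where c0: "c \<in> conds N \<Phi>"
      and \<psi>0: "\<psi> = (\<lambda>(\<phi>, is, js). Iff (wrap (Suc N) \<phi> (length is) is) (wrap (Suc N) \<phi> (length js) js)) c"
      using inW unfolding WF_def by blast
    obtain \<phi> "is" js where cc: "c = (\<phi>, is, js)" by (cases c) auto
    have c: "(\<phi>, is, js) \<in> conds N \<Phi>" using c0 cc by simp
    have \<psi>: "\<psi> = Iff (wrap (Suc N) \<phi> (length is) is) (wrap (Suc N) \<phi> (length js) js)"
      using \<psi>0 cc by simp
    have "\<phi> \<in> \<Phi>" using c unfolding conds_def by auto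
    then have "params \<phi> = {}" using L unfolding L_formula_def by blast
    then show ?thesis unfolding \<psi> params_Iff params_wrap by simp
  qed
  moreover have "finite (WF N \<Phi>)"
    unfolding WF_def using finite_conds[OF fin] by simp
  ultimately show ?thesis unfolding GF_def params.simps by (simp add: params_conjset)
qed

definition chi :: "'a list \<Rightarrow> nat \<Rightarrow> ('f,'r,'a) fm set \<Rightarrow> ('f,'r,'a) fm" where
  "chi as N \<Phi> = Ex (Suc N + length as) (Conj (Eq (Var (Suc N + length as)) (Var 0))
     (exs [Suc N + length as + 1..<Suc N + N] (inst {Suc N..<Suc N + length as} (\<lambda>v. as ! (v - Suc N)) (GF N \<Phi>))))"

lemma const_upd: "(\<lambda>_. a)(m := a) = (\<lambda>_. a)"
  by (rule ext) simp

lemma sat_chi: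
  assumes fin: "finite \<Phi>"
  shows "sat M (\<lambda>_. a) (chi as N \<Phi>) \<longleftrightarrow>
    (\<exists>h. (\<forall>v. v \<notin> set [Suc N + length as + 1..<Suc N + N] \<longrightarrow> h v = a) \<and>
        Good M N \<Phi> (\<lambda>k. if k < length as then as ! k else h (k + Suc N)))"
proof -
  let ?m = "Suc N + length as"
  let ?X = "exs [?m + 1..<Suc N + N] (inst {Suc N..<?m} (\<lambda>v. as ! (v - Suc N)) (GF N \<Phi>))"
  have "sat M (\<lambda>_. a) (chi as N \<Phi>) \<longleftrightarrow> (\<exists>b. b = a \<and> sat M ((\<lambda>_. a)(?m := b)) ?X)"
    unfolding chi_def by simp
  also have "\<dots> \<longleftrightarrow> sat M (\<lambda>_. a) ?X" using const_upd[of a ?m] by auto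
  also have "\<dots> \<longleftrightarrow> (\<exists>h. (\<forall>v. v \<notin> set [?m + 1..<Suc N + N] \<longrightarrow> h v = a) \<and>
       sat M h (inst {Suc N..<?m} (\<lambda>v. as ! (v - Suc N)) (GF N \<Phi>)))"
    by (rule sat_exs)
  also have "\<dots> \<longleftrightarrow> (\<exists>h. (\<forall>v. v \<notin> set [?m + 1..<Suc N + N] \<longrightarrow> h v = a) \<and>
       Good M N \<Phi> (\<lambda>k. if k < length as then as ! k else h (k + Suc N)))"
  proof -
    have "sat M h (inst {Suc N..<?m} (\<lambda>v. as ! (v - Suc N)) (GF N \<Phi>)) \<longleftrightarrow>
          Good M N \<Phi> (\<lambda>k. if k < length as then as ! k else h (k + Suc N))" for h
    proof -
      have "sat M h (inst {Suc N..<?m} (\<lambda>v. as ! (v - Suc N)) (GF N \<Phi>)) \<longleftrightarrow>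
            sat M (\<lambda>v. if v \<in> {Suc N..<?m} then as ! (v - Suc N) else h v) (GF N \<Phi>)"
        by (rule sat_inst)
      also have "\<dots> \<longleftrightarrow> Good M N \<Phi> (\<lambda>k. (\<lambda>v. if v \<in> {Suc N..<?m} then as ! (v - Suc N) else h v) (k + Suc N))"
        by (rule sat_GF[OF fin])
      also have "(\<lambda>k. (\<lambda>v. if v \<in> {Suc N..<?m} then as ! (v - Suc N) else h v) (k + Suc N)) =
                 (\<lambda>k. if k < length as then as ! k else h (k + Suc N))"
        by (rule ext) simp
      finally show ?thesis .
    qed
    then show ?thesis by simp
  qed
  finally show ?thesis .
qed

lemma fv_chi:
  fixes \<Phi> :: "('f,'r,'a) fm set"
  assumes fin: "finite \<Phi>"
  shows "fv (chi as N \<Phi>) \<subseteq> {0}"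
proof -
  let ?m = "Suc N + length as"
  have G: "fv (GF N \<Phi>) \<subseteq> {Suc N..<Suc N + N}" by (rule fv_GF[OF fin])
  have "fv (exs [?m + 1..<Suc N + N] (inst {Suc N..<?m} (\<lambda>v. as ! (v - Suc N)) (GF N \<Phi>)))
        = fv (GF N \<Phi>) - {Suc N..<?m} - set [?m + 1..<Suc N + N]"
    by (simp add: fv_exs fv_inst)
  also have "\<dots> \<subseteq> {?m}"
  proof
    fix x assume x: "x \<in> fv (GF N \<Phi>) - {Suc N..<?m} - set [?m + 1..<Suc N + N]"
    then have "x \<in> {Suc N..<Suc N + N}" using G by blast
    then show "x \<in> {?m}" using x by auto
  qed
  finally show ?thesis unfolding chi_def by auto
qed

lemma params_chi:
  fixes \<Phi> :: "('f,'r,'a) fm set"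
  assumes fin: "finite \<Phi>" and L: "\<forall>\<phi>\<in>\<Phi>. L_formula \<phi>"
  shows "params (chi as N \<Phi>) \<subseteq> set as"
proof -
  let ?m = "Suc N + length as"
  have "params (inst {Suc N..<?m} (\<lambda>v. as ! (v - Suc N)) (GF N \<Phi>)) \<subseteq>
        params (GF N \<Phi>) \<union> (\<lambda>v. as ! (v - Suc N)) ` {Suc N..<?m}" by (rule params_inst)
  also have "\<dots> \<subseteq> set as"
  proof
    fix x assume "x \<in> params (GF N \<Phi>) \<union> (\<lambda>v. as ! (v - Suc N)) ` {Suc N..<?m}"
    then obtain v where v: "v \<in> {Suc N..<?m}" "x = as ! (v - Suc N)" using params_GF[OF fin L] by auto
    then have "v - Suc N < length as" by auto
    then show "x \<in> set as" using v(2) nth_mem by blast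
  qed
  finally show ?thesis unfolding chi_def by (simp add: params_exs)
qed

definition Inv :: "('f,'r,'a) struc \<Rightarrow> 'a list \<Rightarrow> bool" where
  "Inv M as \<longleftrightarrow> (\<forall>N \<Phi>. finite \<Phi> \<and> (\<forall>\<phi>\<in>\<Phi>. L_formula \<phi>) \<longrightarrow>
     (\<exists>s. (\<forall>i<length as. s i = as ! i) \<and> Good M N \<Phi> s))"

lemma Inv_step:
  fixes M :: "('f,'r,'a) struc" and K :: "'k set"
  assumes satur: "saturated K M" and nat: "(natLeq, card_of K) \<in> ordLess" and inv: "Inv M as"
  shows "\<exists>a. Inv M (as @ [a])"
proof -
  define m where "m = length as"
  define p where "p = {chi as N \<Phi> | N (\<Phi> :: ('f,'r,'a) fm set). m < N \<and> finite \<Phi> \<and> (\<forall>\<phi>\<in>\<Phi>. L_formula \<phi>)}"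
  have A: "(card_of (set as), card_of K) \<in> ordLess"
  proof -
    have "(card_of (set as), natLeq) \<in> ordLess" using finite_iff_ordLess_natLeq by blast
    then show ?thesis using nat ordLess_transitive by blast
  qed
  have P: "\<forall>\<phi>\<in>p. params \<phi> \<subseteq> set as \<and> fv \<phi> \<subseteq> {0}"
  proof
    fix \<chi> assume "\<chi> \<in> p"
    then obtain N \<Phi> where o: "\<chi> = chi as N \<Phi>" "finite \<Phi>" "\<forall>\<phi>\<in>\<Phi>. L_formula \<phi>"
      unfolding p_def by blast
    have "params (chi as N \<Phi>) \<subseteq> set as" using o(2,3) by (rule params_chi)
    moreover have "fv (chi as N \<Phi>) \<subseteq> {0}" using o(2) by (rule fv_chi)
    ultimately show "params \<chi> \<subseteq> set as \<and> fv \<chi> \<subseteq> {0}" using o(1) by simp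
  qed
  have F: "\<forall>q. finite q \<and> q \<subseteq> p \<longrightarrow> (\<exists>a. \<forall>\<phi>\<in>q. sat M (\<lambda>_. a) \<phi>)"
  proof (intro allI impI)
    fix q assume q: "finite q \<and> q \<subseteq> p"
    then have "\<forall>\<chi>\<in>q. \<exists>NP. \<chi> = chi as (fst NP) (snd NP) \<and> m < fst NP \<and> finite (snd NP) \<and> (\<forall>\<phi>\<in>snd NP. L_formula \<phi>)"
      unfolding p_def by fastforce
    then obtain NPf where NP: "\<forall>\<chi>\<in>q. \<chi> = chi as (fst (NPf \<chi>)) (snd (NPf \<chi>)) \<and> m < fst (NPf \<chi>) \<and>
        finite (snd (NPf \<chi>)) \<and> (\<forall>\<phi>\<in>snd (NPf \<chi>). L_formula \<phi>)"
      by (rule bchoice[elim_format]) blast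
    define N' where "N' = Suc m + (\<Sum>\<chi>\<in>q. fst (NPf \<chi>))"
    define \<Phi>' where "\<Phi>' = (\<Union>\<chi>\<in>q. snd (NPf \<chi>))"
    have "finite \<Phi>'" using NP q by (auto simp: \<Phi>'_def)
    moreover have "\<forall>\<phi>\<in>\<Phi>'. L_formula \<phi>" using NP by (auto simp: \<Phi>'_def)
    ultimately obtain s where s: "\<forall>i<m. s i = as ! i" "Good M N' \<Phi>' s"
      using inv unfolding Inv_def m_def by blast
    show "\<exists>a. \<forall>\<phi>\<in>q. sat M (\<lambda>_. a) \<phi>"
    proof (intro exI ballI)
      fix \<chi> assume \<chi>: "\<chi> \<in> q"
      define N where "N = fst (NPf \<chi>)"
      define \<Phi> where "\<Phi> = snd (NPf \<chi>)"
      have NP\<chi>: "\<chi> = chi as N \<Phi>" "m < N" "finite \<Phi>" using NP \<chi> unfolding N_def \<Phi>_def by auto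
      have "N \<le> (\<Sum>\<chi>\<in>q. fst (NPf \<chi>))" unfolding N_def using \<chi> q by (intro member_le_sum) auto
      then have le: "N \<le> N'" unfolding N'_def by simp
      have sub: "\<Phi> \<subseteq> \<Phi>'" using \<chi> unfolding \<Phi>_def \<Phi>'_def by blast
      have G: "Good M N \<Phi> s" using Good_mono[OF le sub s(2)] .
      define h where "h = (\<lambda>v::nat. if v \<in> set [Suc N + m + 1..<Suc N + N] then s (v - Suc N) else s m)"
      have h1: "\<forall>v. v \<notin> set [Suc N + m + 1..<Suc N + N] \<longrightarrow> h v = s m"
      proof (intro allI impI)
        fix v assume v: "v \<notin> set [Suc N + m + 1..<Suc N + N]"
        show "h v = s m" unfolding h_def using v by (rule if_not_P)
      qed
      have "\<forall>k<N. s k = (if k < m then as ! k else h (k + Suc N))"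
      proof (intro allI impI)
        fix k assume k: "k < N"
        show "s k = (if k < m then as ! k else h (k + Suc N))"
        proof (cases "k < m")
          case True then show ?thesis using s(1) by simp
        next
          case False
          show ?thesis
          proof (cases "k = m")
            case True
            have "k + Suc N \<notin> set [Suc N + m + 1..<Suc N + N]" using True by simp
            then have "h (k + Suc N) = s m" using h1 by blast
            then show ?thesis using True by simp
          next
            case False
            then have "k + Suc N \<in> set [Suc N + m + 1..<Suc N + N]" using k \<open>\<not> k < m\<close> by auto
            then have "h (k + Suc N) = s (k + Suc N - Suc N)" unfolding h_def by (rule if_P)
            then show ?thesis using \<open>\<not> k < m\<close> by simp
          qed
        qed
      qed
      then have "Good M N \<Phi> (\<lambda>k. if k < m then as ! k else h (k + Suc N))" using G by (rule Good_cong)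
      then have "sat M (\<lambda>_. s m) (chi as N \<Phi>)" using sat_chi[OF NP\<chi>(3), of M "s m" as N] h1 unfolding m_def by blast
      then show "sat M (\<lambda>_. s m) \<chi>" using NP\<chi>(1) by simp
    qed
  qed
  have "\<exists>a. \<forall>\<phi>\<in>p. sat M (\<lambda>_. a) \<phi>"
  proof -
    have "\<forall>A p. (card_of A, card_of K) \<in> ordLess \<longrightarrow> (\<forall>\<phi>\<in>p. params \<phi> \<subseteq> A \<and> fv \<phi> \<subseteq> {0}) \<longrightarrow>
        (\<forall>q. finite q \<and> q \<subseteq> p \<longrightarrow> (\<exists>a. \<forall>\<phi>\<in>q. sat M (\<lambda>_. a) \<phi>)) \<longrightarrow>
        (\<exists>a. \<forall>\<phi>\<in>p. sat M (\<lambda>_. a) \<phi>)" using satur unfolding saturated_def .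
    note SA = this
    have "(card_of (set as), card_of K) \<in> ordLess \<longrightarrow> (\<forall>\<phi>\<in>p. params \<phi> \<subseteq> set as \<and> fv \<phi> \<subseteq> {0}) \<longrightarrow>
        (\<forall>q. finite q \<and> q \<subseteq> p \<longrightarrow> (\<exists>a. \<forall>\<phi>\<in>q. sat M (\<lambda>_. a) \<phi>)) \<longrightarrow>
        (\<exists>a. \<forall>\<phi>\<in>p. sat M (\<lambda>_. a) \<phi>)" by (rule spec[OF spec[OF SA, of "set as"], of p])
    then show ?thesis using A P F by blast
  qed
  then obtain a where a: "\<forall>\<phi>\<in>p. sat M (\<lambda>_. a) \<phi>" by blast
  have "Inv M (as @ [a])" unfolding Inv_def
  proof (intro allI impI)
    fix N and \<Phi> :: "('f,'r,'a) fm set" assume NP: "finite \<Phi> \<and> (\<forall>\<phi>\<in>\<Phi>. L_formula \<phi>)"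
    define N' where "N' = max N (Suc m)"
    have "m < N'" unfolding N'_def by simp
    then have "chi as N' \<Phi> \<in> p" unfolding p_def using NP by blast
    then have "sat M (\<lambda>_. a) (chi as N' \<Phi>)" using a by blast
    then obtain h where h: "\<forall>v. v \<notin> set [Suc N' + m + 1..<Suc N' + N'] \<longrightarrow> h v = a"
      "Good M N' \<Phi> (\<lambda>k. if k < m then as ! k else h (k + Suc N'))"
      using sat_chi[of \<Phi> M a as N'] NP unfolding m_def by blast
    let ?s = "\<lambda>k. if k < m then as ! k else h (k + Suc N')"
    have "\<forall>i<length (as @ [a]). ?s i = (as @ [a]) ! i"
    proof (intro allI impI)
      fix i assume i: "i < length (as @ [a])"
      show "?s i = (as @ [a]) ! i"
      proof (cases "i < m")
        case True then show ?thesis by (simp add: nth_append m_def)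
      next
        case False
        then have "i = m" using i unfolding m_def by simp
        moreover have "m + Suc N' \<notin> set [Suc N' + m + 1..<Suc N' + N']" by simp
        ultimately show ?thesis using h(1) by (simp add: nth_append m_def)
      qed
    qed
    moreover have "N \<le> N'" unfolding N'_def by simp
    then have "Good M N \<Phi> ?s" using Good_mono[OF _ subset_refl h(2)] by blast
    ultimately show "\<exists>s. (\<forall>i<length (as @ [a]). s i = (as @ [a]) ! i) \<and> Good M N \<Phi> s" by (intro exI[of _ ?s] conjI)
  qed
  then show ?thesis by blast
qed

primrec pref :: "('f,'r,'a) struc \<Rightarrow> nat \<Rightarrow> 'a list" where
  "pref M 0 = []"
| "pref M (Suc k) = pref M k @ [SOME a. Inv M (pref M k @ [a])]"

lemma pref_len: "length (pref M k) = k"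
  by (induction k) auto

lemma pref_Inv:
  assumes "Inv M []" "\<And>as. Inv M as \<Longrightarrow> \<exists>a. Inv M (as @ [a])"
  shows "Inv M (pref M k)"
proof (induction k)
  case 0 then show ?case using assms(1) by simp
next
  case (Suc k)
  then have "\<exists>a. Inv M (pref M k @ [a])" using assms(2) by blast
  then have "Inv M (pref M k @ [SOME a. Inv M (pref M k @ [a])])" by (rule someI_ex)
  then show ?case by simp
qed

lemma pref_nth: "i < k \<Longrightarrow> pref M k ! i = pref M (Suc i) ! i"
proof (induction k)
  case 0 then show ?case by simp
next
  case (Suc k)
  show ?case
  proof (cases "i < k")
    case True
    then have "pref M (Suc k) ! i = pref M k ! i" by (simp add: nth_append pref_len)
    then show ?thesis using Suc True by simp
  next
    case False
    then have "i = k" using Suc by simp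
    then show ?thesis by simp
  qed
qed

lemma build:
  fixes M :: "('f,'r,'a) struc"
  assumes I0: "Inv M []" and st: "\<And>as. Inv M as \<Longrightarrow> \<exists>a. Inv M (as @ [a])"
  shows "\<exists>I. infinite I \<and> indiscernible_set M I"
proof -
  define s where "s = (\<lambda>i. pref M (Suc i) ! i)"
  have GA: "Good M N \<Phi> s" if "finite \<Phi>" "\<forall>\<phi>\<in>\<Phi>. L_formula \<phi>" for N and \<Phi> :: "('f,'r,'a) fm set"
  proof -
    have inv: "Inv M (pref M N)" using pref_Inv[OF I0 st] .
    have "\<exists>s'. (\<forall>i<length (pref M N). s' i = pref M N ! i) \<and> Good M N \<Phi> s'"
      using inv[unfolded Inv_def, rule_format, OF conjI[OF that(1) that(2)]] .
    then obtain s' where s': "\<forall>i<length (pref M N). s' i = pref M N ! i" "Good M N \<Phi> s'"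
      by blast
    have "\<forall>k<N. s' k = s k"
    proof (intro allI impI)
      fix k assume "k < N"
      then show "s' k = s k" using s'(1) pref_nth[of k N M] unfolding s_def pref_len by simp
    qed
    then show ?thesis using s'(2) by (rule Good_cong)
  qed
  have injs: "inj s"
  proof (rule injI)
    fix x y assume xy: "s x = s y"
    have "Good M (Suc (x + y)) ({} :: ('f,'r,'a) fm set) s" using GA by simp
    then have "inj_on s {..<Suc (x + y)}" unfolding Good_def by blast
    moreover have "x \<in> {..<Suc (x + y)}" "y \<in> {..<Suc (x + y)}" by auto
    ultimately show "x = y" using xy unfolding inj_on_def by blast
  qed
  define I where "I = range s"
  have "infinite I"
  proof
    assume "finite I"
    then have "finite (UNIV :: nat set)" using finite_imageD[of s UNIV] injs unfolding I_def by simp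
    then show False by simp
  qed
  moreover have "indiscernible_set M I"
    unfolding indiscernible_set_def
  proof (intro allI impI)
    fix n xs ys and \<phi> :: "('f,'r,'a) fm"
    assume c: "length xs = n \<and> length ys = n \<and> distinct xs \<and> distinct ys \<and> set xs \<subseteq> I \<and> set ys \<subseteq> I"
      and \<phi>: "L_formula \<phi> \<and> fv \<phi> \<subseteq> {..<n}"
    define "is" where "is = map (inv s) xs"
    define js where "js = map (inv s) ys"
    have xs: "xs = map s is" unfolding is_def map_map
    proof -
      have "\<forall>x\<in>set xs. (s \<circ> inv s) x = x" using c unfolding I_def by (auto simp: f_inv_into_f)
      then show "xs = map (s \<circ> inv s) xs" by (simp add: map_idI)
    qed
    have ys: "ys = map s js" unfolding js_def map_map
    proof -
      have "\<forall>x\<in>set ys. (s \<circ> inv s) x = x" using c unfolding I_def by (auto simp: f_inv_into_f)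
      then show "ys = map (s \<circ> inv s) ys" by (simp add: map_idI)
    qed
    have di: "distinct is" using c xs by (simp add: distinct_map)
    have dj: "distinct js" using c ys by (simp add: distinct_map)
    have li: "length is = n" "length js = n" using c by (auto simp: is_def js_def)
    define N where "N = Suc (sum_list is + sum_list js)"
    have si: "set is \<subseteq> {..<N}"
    proof
      fix x assume "x \<in> set is"
      then have "x \<le> sum_list is" by (rule member_le_sum_list) simp
      then show "x \<in> {..<N}" unfolding N_def by simp
    qed
    have sj: "set js \<subseteq> {..<N}"
    proof
      fix x assume "x \<in> set js"
      then have "x \<le> sum_list js" by (rule member_le_sum_list) simp
      then show "x \<in> {..<N}" unfolding N_def by simp
    qed
    have "Good M N {\<phi>} s" using GA \<phi> by simp
    then have eq: "sat M (\<lambda>i. s (is ! i)) \<phi> \<longleftrightarrow> sat M (\<lambda>i. s (js ! i)) \<phi>"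
      unfolding Good_def using di dj li si sj \<phi> by auto
    have "sat M (\<lambda>i. xs ! i) \<phi> = sat M (\<lambda>i. s (is ! i)) \<phi>"
    proof (rule sat_cong, rule ballI)
      fix v assume "v \<in> fv \<phi>"
      then have "v < length is" using \<phi> li by auto
      then show "xs ! v = s (is ! v)" using xs by simp
    qed
    moreover have "sat M (\<lambda>i. ys ! i) \<phi> = sat M (\<lambda>i. s (js ! i)) \<phi>"
    proof (rule sat_cong, rule ballI)
      fix v assume "v \<in> fv \<phi>"
      then have "v < length js" using \<phi> li by auto
      then show "ys ! v = s (js ! v)" using ys by simp
    qed
    ultimately show "sat M (\<lambda>i. xs ! i) \<phi> \<longleftrightarrow> sat M (\<lambda>i. ys ! i) \<phi>" using eq by simp
  qed
  ultimately show ?thesis by blast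
qed

lemma base_Inv:
  fixes M :: "('f,'r,'a) struc"
  assumes H: "Hyp M"
  shows "Inv M []"
  unfolding Inv_def
proof (intro allI impI)
  fix N and \<Phi> :: "('f,'r,'a) fm set" assume NP: "finite \<Phi> \<and> (\<forall>\<phi>\<in>\<Phi>. L_formula \<phi>)"
  define \<Psi> where "\<Psi> = {\<phi>\<in>\<Phi>. fv \<phi> \<subseteq> {..<N}}"
  have "finite \<Psi>" using NP unfolding \<Psi>_def by simp
  moreover have "\<forall>\<phi>\<in>\<Psi>. L_formula \<phi> \<and> fv \<phi> \<subseteq> {..<N}" using NP unfolding \<Psi>_def by blast
  ultimately obtain bs where bs: "length bs = N" "distinct bs" "\<forall>\<phi>\<in>\<Psi>. Hom M bs N \<phi>"
    using block_lemma[OF H] by blast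
  define s where "s = (\<lambda>k. bs ! k)"
  have "Good M N \<Phi> s"
    unfolding Good_def
  proof (intro conjI ballI allI impI)
    show "inj_on s {..<N}" unfolding s_def using bs by (intro inj_on_nth) auto
  next
    fix \<phi> "is" js assume \<phi>: "\<phi> \<in> \<Phi>" and c: "distinct is \<and> distinct js \<and> length is = length js \<and>
      set is \<subseteq> {..<N} \<and> set js \<subseteq> {..<N} \<and> fv \<phi> \<subseteq> {..<length is}"
    have ln: "length is \<le> N" using c len_le by blast
    then have "fv \<phi> \<subseteq> {..<N}" using c by auto
    then have "\<phi> \<in> \<Psi>" using \<phi> unfolding \<Psi>_def by blast
    then have "Hom M bs N \<phi>" using bs by blast
    moreover have "fv \<phi> \<subseteq> {..<length is}" using c by blast
    moreover have "N \<le> length bs" using bs(1) by simp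
    ultimately have hom: "Hom M bs (length is) \<phi>" using ln Hom_down by blast
    have "sat M (\<lambda>i. bs ! (is ! i)) \<phi> \<longleftrightarrow> sat M (\<lambda>i. bs ! i) \<phi>"
    proof -
      have "inj_on (nth is) {..<length is}" using c by (intro inj_on_nth) auto
      moreover have "nth is ` {..<length is} \<subseteq> {..<length bs}"
      proof
        fix x assume "x \<in> nth is ` {..<length is}"
        then obtain i where i: "i < length is" "x = is ! i" using c by auto
        then have "is ! i \<in> set is" by (intro nth_mem)
        then show "x \<in> {..<length bs}" using c bs(1) i(2) by blast
      qed
      ultimately show ?thesis using hom unfolding Hom_def by blast
    qed
    moreover have "sat M (\<lambda>i. bs ! (js ! i)) \<phi> \<longleftrightarrow> sat M (\<lambda>i. bs ! i) \<phi>"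
    proof -
      have "inj_on (nth js) {..<length is}" using c by (intro inj_on_nth) auto
      moreover have "nth js ` {..<length is} \<subseteq> {..<length bs}"
      proof
        fix x assume "x \<in> nth js ` {..<length is}"
        then obtain i where i: "i < length js" "x = js ! i" using c by auto
        then have "js ! i \<in> set js" by (intro nth_mem)
        then show "x \<in> {..<length bs}" using c bs(1) i(2) by blast
      qed
      ultimately show ?thesis using hom unfolding Hom_def by blast
    qed
    ultimately show "sat M (\<lambda>i. s (is ! i)) \<phi> \<longleftrightarrow> sat M (\<lambda>i. s (js ! i)) \<phi>" unfolding s_def by simp
  qed
  then show "\<exists>s. (\<forall>i<length []. s i = [] ! i) \<and> Good M N \<Phi> s" by auto
qed

lemma perm_list:
  assumes p: "\<pi> permutes {..<n}" and l: "length as = n" and d: "distinct as"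
  shows "distinct (map (\<lambda>i. as ! (\<pi> i)) [0..<n]) \<and> set (map (\<lambda>i. as ! (\<pi> i)) [0..<n]) \<subseteq> set as"
proof
  have img: "\<pi> i < n" if "i < n" for i using permutes_in_image[OF p, of i] that by simp
  have "inj_on (\<lambda>i. as ! (\<pi> i)) {0..<n}"
  proof (rule inj_onI)
    fix x y assume x: "x \<in> {0..<n}" and y: "y \<in> {0..<n}" and e: "as ! (\<pi> x) = as ! (\<pi> y)"
    have "\<pi> x < length as" "\<pi> y < length as" using img x y l by auto
    then have "\<pi> x = \<pi> y" using e d nth_eq_iff_index_eq by blast
    then show "x = y" using permutes_inj[OF p] unfolding inj_def by blast
  qed
  then show "distinct (map (\<lambda>i. as ! (\<pi> i)) [0..<n])" by (simp add: distinct_map)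
  show "set (map (\<lambda>i. as ! (\<pi> i)) [0..<n]) \<subseteq> set as"
  proof
    fix x assume "x \<in> set (map (\<lambda>i. as ! (\<pi> i)) [0..<n])"
    then obtain i where i: "i < n" "x = as ! (\<pi> i)" by auto
    then have "\<pi> i < length as" using img l by auto
    then show "x \<in> set as" using i(2) nth_mem by blast
  qed
qed

lemma sat_perm_list:
  assumes "fv \<phi> \<subseteq> {..<n}"
  shows "sat M (\<lambda>i. map (\<lambda>i. as ! (\<pi> i)) [0..<n] ! i) \<phi> = sat M (\<lambda>i. as ! (\<pi> i)) \<phi>"
proof (rule sat_cong, rule ballI)
  fix v assume "v \<in> fv \<phi>"
  then have "v < n" using assms by blast
  then show "map (\<lambda>i. as ! (\<pi> i)) [0..<n] ! v = as ! (\<pi> v)" by simp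
qed

theorem mainTheorem13:
  fixes T :: "('f, 'r, 'a) fm set" and K :: "'k set" and M :: "('f, 'r, 'a) struc"
  assumes "complete_theory T" and "monster_model T K M"
  shows "(\<not> (\<exists>I. infinite I \<and> indiscernible_set M I)) \<longleftrightarrow>
    (\<exists>(n::nat) \<phi>. L_formula \<phi> \<and> fv \<phi> \<subseteq> {..<n} \<and>
       (\<forall>as. length as = n \<and> distinct as \<longrightarrow>
          (\<exists>\<pi>1 \<pi>2. \<pi>1 permutes {..<n} \<and> \<pi>2 permutes {..<n} \<and>
             sat M (\<lambda>i. as ! (\<pi>1 i)) \<phi> \<and> \<not> sat M (\<lambda>i. as ! (\<pi>2 i)) \<phi>)))"
proof
  assume noI: "\<not> (\<exists>I. infinite I \<and> indiscernible_set M I)"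
  show "\<exists>(n::nat) \<phi>. L_formula \<phi> \<and> fv \<phi> \<subseteq> {..<n} \<and>
       (\<forall>as. length as = n \<and> distinct as \<longrightarrow>
          (\<exists>\<pi>1 \<pi>2. \<pi>1 permutes {..<n} \<and> \<pi>2 permutes {..<n} \<and>
             sat M (\<lambda>i. as ! (\<pi>1 i)) \<phi> \<and> \<not> sat M (\<lambda>i. as ! (\<pi>2 i)) \<phi>))"
  proof (rule ccontr)
    assume nR: "\<not> (\<exists>(n::nat) \<phi>. L_formula \<phi> \<and> fv \<phi> \<subseteq> {..<n} \<and>
       (\<forall>as. length as = n \<and> distinct as \<longrightarrow>
          (\<exists>\<pi>1 \<pi>2. \<pi>1 permutes {..<n} \<and> \<pi>2 permutes {..<n} \<and>
             sat M (\<lambda>i. as ! (\<pi>1 i)) \<phi> \<and> \<not> sat M (\<lambda>i. as ! (\<pi>2 i)) \<phi>)))"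
    have H: "Hyp M" unfolding Hyp_def
    proof (intro allI impI)
      fix n and \<phi> :: "('f,'r,'a) fm" assume a: "L_formula \<phi> \<and> fv \<phi> \<subseteq> {..<n}"
      have "\<not> (\<forall>as. length as = n \<and> distinct as \<longrightarrow>
          (\<exists>\<pi>1 \<pi>2. \<pi>1 permutes {..<n} \<and> \<pi>2 permutes {..<n} \<and>
             sat M (\<lambda>i. as ! (\<pi>1 i)) \<phi> \<and> \<not> sat M (\<lambda>i. as ! (\<pi>2 i)) \<phi>))"
        using nR a by blast
      then obtain as where as: "length as = n" "distinct as" "\<not> (\<exists>\<pi>1 \<pi>2. \<pi>1 permutes {..<n} \<and> \<pi>2 permutes {..<n} \<and>
             sat M (\<lambda>i. as ! (\<pi>1 i)) \<phi> \<and> \<not> sat M (\<lambda>i. as ! (\<pi>2 i)) \<phi>)" by blast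
      then show "\<exists>as. length as = n \<and> distinct as \<and> (\<forall>\<pi>1 \<pi>2. \<pi>1 permutes {..<n} \<and> \<pi>2 permutes {..<n} \<longrightarrow>
        sat M (\<lambda>i. as ! (\<pi>1 i)) \<phi> \<longrightarrow> sat M (\<lambda>i. as ! (\<pi>2 i)) \<phi>)" by blast
    qed
    have satur: "saturated K M" and nat: "(natLeq, card_of K) \<in> ordLess"
      using assms(2) unfolding monster_model_def by auto
    have "\<exists>I. infinite I \<and> indiscernible_set M I"
      by (rule build[OF base_Inv[OF H]]) (rule Inv_step[OF satur nat])
    with noI show False by blast
  qed
next
  assume "\<exists>(n::nat) \<phi>. L_formula \<phi> \<and> fv \<phi> \<subseteq> {..<n} \<and>
       (\<forall>as. length as = n \<and> distinct as \<longrightarrow>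
          (\<exists>\<pi>1 \<pi>2. \<pi>1 permutes {..<n} \<and> \<pi>2 permutes {..<n} \<and>
             sat M (\<lambda>i. as ! (\<pi>1 i)) \<phi> \<and> \<not> sat M (\<lambda>i. as ! (\<pi>2 i)) \<phi>))"
  then obtain n and \<phi> :: "('f,'r,'a) fm" where L: "L_formula \<phi>" "fv \<phi> \<subseteq> {..<n}"
    and R2: "\<forall>as. length as = n \<and> distinct as \<longrightarrow>
          (\<exists>\<pi>1 \<pi>2. \<pi>1 permutes {..<n} \<and> \<pi>2 permutes {..<n} \<and>
             sat M (\<lambda>i. as ! (\<pi>1 i)) \<phi> \<and> \<not> sat M (\<lambda>i. as ! (\<pi>2 i)) \<phi>)" by blast
  show "\<not> (\<exists>I. infinite I \<and> indiscernible_set M I)"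
  proof
    assume "\<exists>I. infinite I \<and> indiscernible_set M I"
    then obtain I where I: "infinite I" "indiscernible_set M I" by blast
    obtain F where F: "finite F" "card F = n" "F \<subseteq> I" using infinite_arbitrarily_large[OF I(1)] by blast
    obtain as where as: "set as = F" "distinct as" using finite_distinct_list[OF F(1)] by blast
    have las: "length as = n" using as F(2) distinct_card by metis
    obtain \<pi>1 \<pi>2 where p: "\<pi>1 permutes {..<n}" "\<pi>2 permutes {..<n}"
      "sat M (\<lambda>i. as ! (\<pi>1 i)) \<phi>" "\<not> sat M (\<lambda>i. as ! (\<pi>2 i)) \<phi>" using R2 las as(2) by blast
    define xs where "xs = map (\<lambda>i. as ! (\<pi>1 i)) [0..<n]"
    define ys where "ys = map (\<lambda>i. as ! (\<pi>2 i)) [0..<n]"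
    have x: "distinct xs" "set xs \<subseteq> set as" using perm_list[OF p(1) las as(2)] unfolding xs_def by auto
    have y: "distinct ys" "set ys \<subseteq> set as" using perm_list[OF p(2) las as(2)] unfolding ys_def by auto
    have lx: "length xs = n" "length ys = n" unfolding xs_def ys_def by auto
    have sI: "set xs \<subseteq> I" "set ys \<subseteq> I" using x(2) y(2) as(1) F(3) by auto
    have "sat M (\<lambda>i. xs ! i) \<phi> \<longleftrightarrow> sat M (\<lambda>i. ys ! i) \<phi>"
      using I(2) lx x(1) y(1) sI L unfolding indiscernible_set_def by blast
    moreover have "sat M (\<lambda>i. xs ! i) \<phi> = sat M (\<lambda>i. as ! (\<pi>1 i)) \<phi>"
      unfolding xs_def using L(2) by (rule sat_perm_list)
    moreover have "sat M (\<lambda>i. ys ! i) \<phi> = sat M (\<lambda>i. as ! (\<pi>2 i)) \<phi>"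
      unfolding ys_def using L(2) by (rule sat_perm_list)
    ultimately show False using p(3,4) by simp
  qed
qed

end
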